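(* Let $C$ be a $2\times N$ real matrix with non-negative entries and let $1\le p\le2$. If $C_{ij}=0$ for some entry, then $(C^{[p-1]})_{ij}\le0$.
   Context: For a real or complex matrix $C$ and real $r$, the $r$-th polar power is $C^{[r]}:=(CC^* )^{(r-1)/2}C$ (here $C^*=C^T$). For $p<2$ the exponent $(p-2)/2$ is negative; if $CC^T$ is singular, powers of the positive semidefinite matrix $CC^T$ are taken on its support (i.e. via its spectral decomposition, using only the nonzero eigenvalues), equivalently $C^{[r]}=|C^*|^{r-1}U$ where $C=U|C|$ is the polar decomposition. *)

theory Defs
  imports "HOL-Analysis.Analysis"
begin

definition diag_mat :: "('m::finite \<Rightarrow> real) \<Rightarrow> real^'m^'m" where
  "diag_mat d = (\<chi> i j. if i = j then d i else 0)"

definition supp_pow :: "real^'m^'m \<Rightarrow> real \<Rightarrow> real^'m^'m::finite" where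
  "supp_pow A s = (SOME B. \<exists>Q d. orthogonal_matrix Q \<and> A = Q ** diag_mat d ** transpose Q \<and>
      B = Q ** diag_mat (\<lambda>i. if d i = 0 then 0 else d i powr s) ** transpose Q)"

definition polar_power :: "real^'n^'m \<Rightarrow> real \<Rightarrow> real^'n^'m::finite" where
  "polar_power C r = supp_pow (C ** transpose C) ((r - 1) / 2) ** C"

end

theory Submission
  imports Defs
begin

lemma spec2_aux:
  fixes A :: "real^2^2" and X Y r u :: real
  assumes sym: "A $ 1 $ 2 = A $ 2 $ 1"
  and a_def: "a = A$1$1" and b_def: "b = A$1$2" and c_def: "c = A$2$2"
  and r0: "r > 0" and u_def: "u = (a-c)/r" and X2: "X^2 = (1 + u)/2" and Y2: "Y^2 = (1 - u)/2"
  and XY: "X*Y = b/r"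
  shows "\<exists>Q d. orthogonal_matrix Q \<and> A = Q ** diag_mat d ** transpose Q"
proof -
    define Q :: "real^2^2" where "Q = (\<chi> i j. if i = 1 then (if j = 1 then X else -Y) else (if j = 1 then Y else X))"
    define d :: "2 \<Rightarrow> real" where "d = (\<lambda>k. if k = 1 then (a+c+r)/2 else (a+c-r)/2)"
    have XY1: "X*X + Y*Y = 1" using X2 Y2 by (simp add: power2_eq_square)
    have "orthogonal_matrix Q" unfolding orthogonal_matrix_def Q_def
      using XY1 by (simp add: vec_eq_iff forall_2 matrix_matrix_mult_def sum_2 transpose_def mat_def mult.commute)
    moreover have "A = Q ** diag_mat d ** transpose Q"
    proof -
      have xx: "X*X = (1+u)/2" "Y*Y = (1-u)/2" using X2 Y2 by (simp_all add: power2_eq_square)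
      have e1: "a = (a+c+r)/2 * (X*X) + (a+c-r)/2 * (Y*Y)" using r0 unfolding xx u_def by (simp add: field_simps)
      have e2: "c = (a+c+r)/2 * (Y*Y) + (a+c-r)/2 * (X*X)" using r0 unfolding xx u_def by (simp add: field_simps)
      have e3: "b = r * (X*Y)" using XY r0 by simp
      have e4: "b = (a+c+r)/2 * (X*Y) - (a+c-r)/2 * (X*Y)" using e3 by (simp add: field_simps)
      show ?thesis using sym unfolding Q_def d_def
        apply (simp add: vec_eq_iff forall_2 matrix_matrix_mult_def sum_2 transpose_def diag_mat_def)
        using e1 e2 e4 unfolding a_def b_def c_def by (simp add: algebra_simps)
    qed
    ultimately show ?thesis by blast
qed

lemma spec2:
  fixes A :: "real^2^2"
  assumes sym: "A $ 1 $ 2 = A $ 2 $ 1"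
  shows "\<exists>Q d. orthogonal_matrix Q \<and> A = Q ** diag_mat d ** transpose Q"
proof -
  define a where "a = A$1$1"
  define b where "b = A$1$2"
  define c where "c = A$2$2"
  define r where "r = sqrt ((a-c)^2 + 4*b^2)"
  show ?thesis
  proof (cases "r = 0")
    case True
    then have h: "(a-c)^2 + 4*b^2 = 0" unfolding r_def by simp
    have "(a-c)^2 \<ge> 0" "b^2 \<ge> 0" by simp_all
    then have "(a-c)^2 = 0" "b^2 = 0" using h by linarith+
    then have "a = c" "b = 0" by simp_all
    then have "A = mat 1 ** diag_mat (\<lambda>_. a) ** transpose (mat 1)"
      using sym unfolding a_def b_def c_def
      by (simp add: vec_eq_iff forall_2 diag_mat_def)
    moreover have "orthogonal_matrix (mat 1 :: real^2^2)" by (simp add: orthogonal_matrix_def)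
    ultimately show ?thesis by blast
  next
    case False
    have "r \<ge> 0" unfolding r_def by simp
    then have r0: "r > 0" using False by linarith
    have r2: "r^2 = (a-c)^2 + 4*b^2" unfolding r_def by simp
    have ac: "\<bar>a - c\<bar> \<le> r" unfolding r_def
      by (rule real_le_rsqrt) simp
    define u where "u = (a-c)/r"
    define s :: real where "s = (if b < 0 then -1 else 1)"
    define X where "X = sqrt ((1 + u)/2)"
    define Y where "Y = s * sqrt ((1 - u)/2)"
    have p1: "u \<le> 1" "-1 \<le> u" using ac r0 by (auto simp: u_def divide_simps abs_le_iff)
    have X2: "X^2 = (1 + u)/2" unfolding X_def using p1 by simp
    have Y2: "Y^2 = (1 - u)/2" unfolding Y_def using p1
      by (simp add: power_mult_distrib s_def)
    have prod: "(1+u)/2 * ((1-u)/2) = (b/r)^2"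
      unfolding u_def using r0 r2 by (simp add: field_simps power2_eq_square)
    have XY: "X*Y = b/r"
    proof -
      have "X*Y = s * sqrt ((b/r)^2)" unfolding X_def Y_def prod[symmetric] real_sqrt_mult
        by simp
      also have "\<dots> = s * \<bar>b\<bar> / r" using r0 by simp
      also have "\<dots> = b / r" by (simp add: s_def)
      finally show ?thesis .
    qed
    show ?thesis by (rule spec2_aux[OF sym a_def b_def c_def r0 u_def X2 Y2 XY])
  qed
qed

lemma sum_other: assumes "i \<noteq> (i'::2)" shows "sum f UNIV = f i + f i'"
proof -
  have U: "UNIV = {i, i'}" using assms by (auto) (metis exhaust_2)+
  show ?thesis unfolding U using assms by simp
qed

lemma key:
  fixes C :: "real^'n::finite^2" and Q :: "real^2^2" and d :: "2 \<Rightarrow> real" and s :: real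
  assumes nonneg: "\<forall>a b. C$a$b \<ge> 0" and s0: "s \<le> 0" and Cij: "C$i$j = 0"
    and oQ: "orthogonal_matrix Q"
    and A: "C ** transpose C = Q ** diag_mat d ** transpose Q"
  shows "(Q ** diag_mat (\<lambda>k. if d k = 0 then 0 else d k powr s) ** transpose Q ** C) $ i $ j \<le> 0"
proof -
  define f where "f = (\<lambda>k. if d k = 0 then 0 else d k powr s)"
  define B where "B = Q ** diag_mat f ** transpose Q"
  have QtQ: "transpose Q ** Q = mat 1" and QQt: "Q ** transpose Q = mat 1"
    using oQ unfolding orthogonal_matrix_def by auto
  define M where "M = transpose Q ** C"
  have CM: "C = Q ** M" unfolding M_def by (simp add: matrix_mul_assoc QQt)
  have "transpose Q ** (C ** transpose C) ** Q = diag_mat d"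
    unfolding A by (simp add: matrix_mul_assoc QtQ) (simp add: matrix_mul_assoc[symmetric] QtQ)
  then have D: "M ** transpose M = diag_mat d"
    unfolding M_def by (simp add: matrix_transpose_mul matrix_mul_assoc)
  have dk: "d k = (\<Sum>b\<in>UNIV. M$k$b * M$k$b)" for k
    using arg_cong[OF D, of "\<lambda>X. X$k$k"] by (simp add: matrix_matrix_mult_def diag_mat_def transpose_def)
  have dnn: "d k \<ge> 0" for k unfolding dk by (simp add: sum_nonneg)
  have d0: "M$k$b = 0" if "d k = 0" for k b
  proof -
    have "(\<Sum>b\<in>UNIV. M$k$b * M$k$b) = 0" using that dk by simp
    then have "\<forall>b\<in>UNIV. M$k$b * M$k$b = 0" by (subst (asm) sum_nonneg_eq_0_iff) auto
    then show ?thesis by simp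
  qed
  have FM: "(diag_mat f ** M) $ k $ l = f k * M$k$l" for k l
    using exhaust_2[of k] by (auto simp add: matrix_matrix_mult_def diag_mat_def sum_2)
  have BC1: "(B ** C)$i$j = Q$i$1 * (f 1 * M$1$j) + Q$i$2 * (f 2 * M$2$j)"
  proof -
    have "B ** C = Q ** (diag_mat f ** M)" unfolding B_def M_def by (simp add: matrix_mul_assoc)
    then show ?thesis by (simp add: matrix_matrix_mult_def[of Q] FM sum_2)
  qed
  have Cij2: "Q$i$1 * M$1$j + Q$i$2 * M$2$j = 0"
    using Cij unfolding CM by (simp add: matrix_matrix_mult_def sum_2)
  have goal: "(B ** C)$i$j \<le> 0"
  proof (cases "d 1 = 0 \<or> d 2 = 0")
    case True
    then show ?thesis
    proof
      assume h: "d 1 = 0"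
      then have "Q$i$2 * M$2$j = 0" using Cij2 d0[OF h] by simp
      then show ?thesis unfolding BC1 using h by (auto simp add: f_def)
    next
      assume h: "d 2 = 0"
      then have "Q$i$1 * M$1$j = 0" using Cij2 d0[OF h] by simp
      then show ?thesis unfolding BC1 using h by (auto simp add: f_def)
    qed
  next
    case False
    then have dp: "d 1 > 0" "d 2 > 0" using dnn[of 1] dnn[of 2] by auto
    obtain i' :: 2 where ii: "i' \<noteq> i" using exhaust_2[of i] by (metis num1_eq1 one_neq_zero zero_neq_numeral)
    have BC2: "(B ** C)$i$j = B$i$i' * C$i'$j"
      by (simp add: matrix_matrix_mult_def[of B] sum_other[OF ii[symmetric]] Cij)
    have Bii: "B$i$i' = Q$i$1 * Q$i'$1 * f 1 + Q$i$2 * Q$i'$2 * f 2"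
      unfolding B_def by (simp add: matrix_matrix_mult_def sum_2 diag_mat_def transpose_def)
    have Aii: "(C ** transpose C)$i$i' = Q$i$1 * Q$i'$1 * d 1 + Q$i$2 * Q$i'$2 * d 2"
      unfolding A by (simp add: matrix_matrix_mult_def sum_2 diag_mat_def transpose_def)
    have Ann: "(C ** transpose C)$i$i' \<ge> 0"
      using nonneg by (simp add: matrix_matrix_mult_def transpose_def sum_nonneg)
    have Oii: "Q$i$1 * Q$i'$1 + Q$i$2 * Q$i'$2 = 0"
      using arg_cong[OF QQt, of "\<lambda>X. X$i$i'"] ii by (simp add: matrix_matrix_mult_def sum_2 transpose_def mat_def)
    define w where "w = Q$i$1 * Q$i'$1"
    have o2: "Q$i$2 * Q$i'$2 = - w" using Oii unfolding w_def by linarith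
    have Bw: "B$i$i' = w * (f 1 - f 2)" unfolding Bii o2 w_def[symmetric] by (simp add: algebra_simps)
    have Aw: "w * (d 1 - d 2) \<ge> 0" using Ann unfolding Aii o2 w_def[symmetric] by (simp add: algebra_simps)
    have fk: "f 1 = d 1 powr s" "f 2 = d 2 powr s" using dp by (simp_all add: f_def)
    have "w * (f 1 - f 2) \<le> 0"
    proof (cases "d 1 \<le> d 2")
      case True
      then have "f 2 \<le> f 1" unfolding fk using powr_mono2'[OF s0] dp by simp
      moreover have "w \<le> 0 \<or> d 1 = d 2" using Aw True by (smt (verit) mult_pos_neg)
      ultimately show ?thesis using fk by (auto simp: mult_nonpos_nonneg)
    next
      case False
      then have "f 1 \<le> f 2" unfolding fk using powr_mono2'[OF s0] dp by simp
      moreover have "w \<ge> 0" using Aw False by (smt (verit) mult_neg_pos)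
      ultimately show ?thesis by (simp add: mult_nonneg_nonpos)
    qed
    then show ?thesis unfolding BC2 Bw using nonneg by (simp add: mult_nonpos_nonneg)
  qed
  then show ?thesis unfolding B_def f_def .
qed

theorem mainTheorem11:
  fixes C :: "real^'n::finite^2" and p :: real and i :: 2 and j :: 'n
  assumes "\<forall>a b. C $ a $ b \<ge> 0"
    and "1 \<le> p" and "p \<le> 2"
    and "C $ i $ j = 0"
  shows "polar_power C (p - 1) $ i $ j \<le> 0"
proof -
  define A where "A = C ** transpose C"
  define s where "s = (p - 1 - 1) / 2"
  have s0: "s \<le> 0" unfolding s_def using assms(3) by simp
  have sym: "A $ 1 $ 2 = A $ 2 $ 1" unfolding A_def
    by (simp add: matrix_matrix_mult_def transpose_def mult.commute)
  define P where "P = (\<lambda>B. \<exists>Q d. orthogonal_matrix Q \<and> A = Q ** diag_mat d ** transpose Q \<and>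
      B = Q ** diag_mat (\<lambda>i. if d i = 0 then 0 else d i powr s) ** transpose Q)"
  obtain Q0 d0 where "orthogonal_matrix Q0" "A = Q0 ** diag_mat d0 ** transpose Q0"
    using spec2[OF sym] by blast
  then have "\<exists>B. P B" unfolding P_def by blast
  then have "P (supp_pow A s)" unfolding P_def supp_pow_def by (rule someI_ex)
  then obtain Q d where oQ: "orthogonal_matrix Q" and AQ: "A = Q ** diag_mat d ** transpose Q"
    and BQ: "supp_pow A s = Q ** diag_mat (\<lambda>i. if d i = 0 then 0 else d i powr s) ** transpose Q"
    unfolding P_def by blast
  have "polar_power C (p - 1) = supp_pow A s ** C" unfolding polar_power_def A_def s_def ..
  then show ?thesis unfolding BQ
    using key[OF assms(1) s0 assms(4) oQ AQ[unfolded A_def]] by simp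
qed

end
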